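(* Let $n,m$ be positive integers with $n>m$, both in canonical form, and let $k=n-m$. Then $n+(-m)\triangleq\{k-1\mid k+1\}\triangleq k+\underline{0}$, where $k-1,k+1,k$ are canonical integers and $\underline{0}\cong 1+(-1)$.
   Context: Games are short normal-play combinatorial games, written $G\cong\{L(G)\mid R(G)\}$, $\cong$ meaning identical literal forms. Canonical integers: $0\cong\{\ \mid\ \}$, $n\cong\{n-1\mid\ \}$ for $n>0$, $n\cong\{\ \mid n+1\}$ for $n<0$. Disjunctive sum $G+H\cong\{L(G)+H,G+L(H)\mid R(G)+H,G+R(H)\}$, negation $-G\cong\{-R(G)\mid -L(G)\}$. $\underline{0}$ denotes the literal game $1+(-1)\cong\{-1\mid 1\}$. Equivalence modulo domination: $G\triangleq H$ means that in $G+(-H)$, for every move by either player as first player in one summand, the other player has a response in the other summand after which the responder wins. *)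

theory Defs
  imports Main "HOL-Library.FSet"
begin

text \<open>Short games as literal forms: a pair of finite sets of Left and Right options.\<close>
datatype game = Game (LO: "game fset") (RO: "game fset")

primrec neg :: "game \<Rightarrow> game" where
  "neg (Game L R) = Game (fimage neg R) (fimage neg L)"

lemma size_opt_less:
  assumes "z |\<in>| A"
  shows "size z < Suc ((\<Sum>x\<in>fset A. Suc (size x)) + (\<Sum>x\<in>fset B. Suc (size (x::game))))"
proof -
  have "Suc (size z) \<le> (\<Sum>x\<in>fset A. Suc (size x))"
    using assms by (intro member_le_sum) auto
  then show ?thesis by linarith
qed

lemma size_opt_less2:
  assumes "z |\<in>| B"
  shows "size z < Suc ((\<Sum>x\<in>fset A. Suc (size (x::game))) + (\<Sum>x\<in>fset B. Suc (size x)))"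
proof -
  have "Suc (size z) \<le> (\<Sum>x\<in>fset B. Suc (size x))"
    using assms by (intro member_le_sum) auto
  then show ?thesis by linarith
qed

lemma size_LO: "x |\<in>| LO g \<Longrightarrow> size x < size g"
  by (cases g) (auto simp: size_fset_overloaded_simps intro: size_opt_less)

lemma size_RO: "x |\<in>| RO g \<Longrightarrow> size x < size g"
  by (cases g) (auto simp: size_fset_overloaded_simps intro: size_opt_less2)

lemma size_grand1: "x |\<in>| R \<Longrightarrow> xa |\<in>| LO x \<Longrightarrow> size xa < size (Game L R)"
proof -
  assume a: "x |\<in>| R" "xa |\<in>| LO x"
  have "size xa < size x" using a(2) by (rule size_LO)
  moreover have "size x < size (Game L R)" using a(1) size_RO[of x "Game L R"] by simp
  ultimately show ?thesis by simp
qed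

lemma size_grand2: "x |\<in>| L \<Longrightarrow> xa |\<in>| RO x \<Longrightarrow> size xa < size (Game L R)"
proof -
  assume a: "x |\<in>| L" "xa |\<in>| RO x"
  have "size xa < size x" using a(2) by (rule size_RO)
  moreover have "size x < size (Game L R)" using a(1) size_LO[of x "Game L R"] by simp
  ultimately show ?thesis by simp
qed

function plus :: "game \<Rightarrow> game \<Rightarrow> game" where
  "plus (Game GL GR) (Game HL HR) =
     Game ((\<lambda>x. plus x (Game HL HR)) |`| GL |\<union>| (\<lambda>y. plus (Game GL GR) y) |`| HL)
          ((\<lambda>x. plus x (Game HL HR)) |`| GR |\<union>| (\<lambda>y. plus (Game GL GR) y) |`| HR)"
  by pat_completeness auto
termination
  by (relation "measure (\<lambda>(G, H). size G + size H)")
     (auto simp: size_fset_overloaded_simps intro: size_opt_less size_opt_less2 add_strict_left_mono add_strict_right_mono)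

function int_game :: "int \<Rightarrow> game" where
  "int_game n = (if n = 0 then Game {||} {||}
                 else if n > 0 then Game {|int_game (n - 1)|} {||}
                 else Game {||} {|int_game (n + 1)|})"
  by auto
termination by (relation "measure (\<lambda>n. nat \<bar>n\<bar>)") auto

declare int_game.simps [simp del]

definition zero_ul :: game where
  "zero_ul = plus (int_game 1) (neg (int_game 1))"

text \<open>Normal-play outcomes.
  right_wins_2nd G: Right wins G when Left moves first (every Left move has a winning Right reply).
  left_wins_2nd G: Left wins G when Right moves first.\<close>
function left_wins_2nd :: "game \<Rightarrow> bool" and right_wins_2nd :: "game \<Rightarrow> bool" where
  "left_wins_2nd (Game L R) =
     (\<forall>gr\<in>fset R. \<exists>grl\<in>fset (LO gr). left_wins_2nd grl)"
| "right_wins_2nd (Game L R) =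
     (\<forall>gl\<in>fset L. \<exists>glr\<in>fset (RO gl). right_wins_2nd glr)"
  by pat_completeness auto
termination
  by (relation "measure (\<lambda>x. case x of Inl G \<Rightarrow> size G | Inr G \<Rightarrow> size G)")
     (simp_all only: in_measure sum.case wf_measure size_grand1 size_grand2)

text \<open>Equivalence modulo domination G \<triangleq> H: in G + (-H), every move by either player
  (as first player) in one summand has a reply by the other player in the other summand
  after which the responder wins (moving second).  Left options of -H are -(H^R), right
  options of -H are -(H^L).\<close>
definition eq_dom :: "game \<Rightarrow> game \<Rightarrow> bool" (infix "\<triangleq>" 50) where
  "G \<triangleq> H \<longleftrightarrow>
     (\<forall>gl. gl |\<in>| LO G \<longrightarrow> (\<exists>hl. hl |\<in>| LO H \<and> right_wins_2nd (plus gl (neg hl)))) \<and>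
     (\<forall>hr. hr |\<in>| RO H \<longrightarrow> (\<exists>gr. gr |\<in>| RO G \<and> right_wins_2nd (plus gr (neg hr)))) \<and>
     (\<forall>gr. gr |\<in>| RO G \<longrightarrow> (\<exists>hr. hr |\<in>| RO H \<and> left_wins_2nd (plus gr (neg hr)))) \<and>
     (\<forall>hl. hl |\<in>| LO H \<longrightarrow> (\<exists>gl. gl |\<in>| LO G \<and> left_wins_2nd (plus gl (neg hl))))"

end

theory Submission
  imports Defs
begin

inductive good :: "game \<Rightarrow> int \<Rightarrow> bool" where
  "(\<forall>x. x |\<in>| LO G \<longrightarrow> good x (v - 1)) \<Longrightarrow> (\<forall>x. x |\<in>| RO G \<longrightarrow> good x (v + 1))
   \<Longrightarrow> (v > 0 \<longrightarrow> LO G \<noteq> {||}) \<Longrightarrow> (v < 0 \<longrightarrow> RO G \<noteq> {||}) \<Longrightarrow> good G v"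

lemma good_wins: "good G v \<Longrightarrow> (v \<le> 0 \<longrightarrow> right_wins_2nd G) \<and> (v \<ge> 0 \<longrightarrow> left_wins_2nd G)"
proof (induction G arbitrary: v rule: measure_induct_rule[of size])
  case (less G v)
  obtain L R where G: "G = Game L R" by (cases G)
  from less.prems have gG: "good G v" .
  then have hL: "\<forall>x. x |\<in>| LO G \<longrightarrow> good x (v - 1)" and hR: "\<forall>x. x |\<in>| RO G \<longrightarrow> good x (v + 1)"
    by (cases rule: good.cases; simp)+
  show ?case
  proof (intro conjI impI)
    assume v: "v \<le> 0"
    show "right_wins_2nd G" unfolding G right_wins_2nd.simps
    proof
      fix gl assume gl: "gl \<in> fset L"
      hence glL: "gl |\<in>| LO G" using G by simp
      hence ggl: "good gl (v - 1)" using hL by simp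
      hence "RO gl \<noteq> {||}" using v by (cases rule: good.cases) simp
      then obtain glr where glr: "glr |\<in>| RO gl" by blast
      have "good glr v" using ggl glr by (cases rule: good.cases) simp
      moreover have "size glr < size G" using size_RO[OF glr] size_LO[OF glL] by simp
      ultimately have "right_wins_2nd glr" using less.IH v by blast
      thus "\<exists>glr\<in>fset (RO gl). right_wins_2nd glr" using glr by auto
    qed
  next
    assume v: "v \<ge> 0"
    show "left_wins_2nd G" unfolding G left_wins_2nd.simps
    proof
      fix gr assume gr: "gr \<in> fset R"
      hence grR: "gr |\<in>| RO G" using G by simp
      hence ggr: "good gr (v + 1)" using hR by simp
      hence "LO gr \<noteq> {||}" using v by (cases rule: good.cases) simp
      then obtain grl where grl: "grl |\<in>| LO gr" by blast
      have "good grl v" using ggr grl by (cases rule: good.cases) simp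
      moreover have "size grl < size G" using size_LO[OF grl] size_RO[OF grR] by simp
      ultimately have "left_wins_2nd grl" using less.IH v by blast
      thus "\<exists>grl\<in>fset (LO gr). left_wins_2nd grl" using grl by auto
    qed
  qed
qed

lemma LO_plus: "LO (plus G H) = (\<lambda>x. plus x H) |`| LO G |\<union>| (\<lambda>y. plus G y) |`| LO H"
  by (cases G; cases H) simp
lemma RO_plus: "RO (plus G H) = (\<lambda>x. plus x H) |`| RO G |\<union>| (\<lambda>y. plus G y) |`| RO H"
  by (cases G; cases H) simp
lemma LO_neg: "LO (neg G) = neg |`| RO G" by (cases G) simp
lemma RO_neg: "RO (neg G) = neg |`| LO G" by (cases G) simp

lemma good_neg: "good G v \<Longrightarrow> good (neg G) (-v)"
proof (induction rule: good.induct)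
  case (1 G v)
  show ?case
    by (rule good.intros) (use 1 in \<open>auto simp: LO_neg RO_neg\<close>)
qed

lemma good_plus: "good G a \<Longrightarrow> \<forall>H b. good H b \<longrightarrow> good (plus G H) (a + b)"
proof (induction rule: good.induct)
  case (1 G a)
  note outer = 1
  show ?case
  proof (intro allI impI)
    fix H b assume "good H b"
    then show "good (plus G H) (a + b)"
    proof (induction rule: good.induct)
      case (1 H b)
      note inner = 1
      have gH: "good H b" by (rule good.intros) (use 1 in auto)
      show ?case
      proof (rule good.intros)
        show "\<forall>x. x |\<in>| LO (plus G H) \<longrightarrow> good x (a + b - 1)"
        proof (intro allI impI)
          fix x assume "x |\<in>| LO (plus G H)"
          then consider gl where "gl |\<in>| LO G" "x = plus gl H" | hl where "hl |\<in>| LO H" "x = plus G hl"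
            unfolding LO_plus by auto
          then show "good x (a + b - 1)"
          proof cases
            case 1
            then have "good (plus gl H) (a - 1 + b)" using outer(1) gH by simp
            then show ?thesis using 1 by (simp add: algebra_simps)
          next
            case 2
            then show ?thesis using inner by (simp add: algebra_simps)
          qed
        qed
        show "\<forall>x. x |\<in>| RO (plus G H) \<longrightarrow> good x (a + b + 1)"
        proof (intro allI impI)
          fix x assume "x |\<in>| RO (plus G H)"
          then consider gl where "gl |\<in>| RO G" "x = plus gl H" | hl where "hl |\<in>| RO H" "x = plus G hl"
            unfolding RO_plus by auto
          then show "good x (a + b + 1)"
          proof cases
            case 1
            then have "good (plus gl H) (a + 1 + b)" using outer(2) gH by simp
            then show ?thesis using 1 by (simp add: algebra_simps)
          next
            case 2
            then show ?thesis using inner by (simp add: algebra_simps)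
          qed
        qed
        show "0 < a + b \<longrightarrow> LO (plus G H) \<noteq> {||}"
          using 1 outer by (auto simp: LO_plus)
        show "a + b < 0 \<longrightarrow> RO (plus G H) \<noteq> {||}"
          using 1 outer by (auto simp: RO_plus)
      qed
    qed
  qed
qed

lemma good_int: "good (int_game n) n"
proof (induction n rule: int_game.induct)
  case (1 n)
  show ?case
    by (rule good.intros) (use 1 in \<open>auto simp: int_game.simps[of n]\<close>)
qed

lemma zero_wins: "good G a \<Longrightarrow> good H a \<Longrightarrow> right_wins_2nd (plus G (neg H)) \<and> left_wins_2nd (plus G (neg H))"
  using good_wins[OF good_plus[rule_format, OF _ good_neg]] by fastforce

lemma int_pos_opts: "n > 0 \<Longrightarrow> LO (int_game n) = {|int_game (n - 1)|} \<and> RO (int_game n) = {||}"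
  by (simp add: int_game.simps[of n])
lemma int_zero: "int_game 0 = Game {||} {||}"
  by (simp add: int_game.simps[of 0])

lemma rw0: "good G a \<Longrightarrow> good H a \<Longrightarrow> right_wins_2nd (plus G (neg H))"
  using zero_wins by blast
lemma lw0: "good G a \<Longrightarrow> good H a \<Longrightarrow> left_wins_2nd (plus G (neg H))"
  using zero_wins by blast

theorem lemma3p2:
  fixes n m k :: int
  assumes "0 < m" and "m < n" and "k = n - m"
  shows "plus (int_game n) (neg (int_game m)) \<triangleq> Game {|int_game (k - 1)|} {|int_game (k + 1)|}
         \<and> Game {|int_game (k - 1)|} {|int_game (k + 1)|} \<triangleq> plus (int_game k) zero_ul"
proof -
  have kp: "k > 0" using assms by simp
  have gp: "good (plus G H) c" if "good G a" "good H b" "c = a + b" for G H a b c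
    using good_plus that by blast
  have gn: "good (neg G) c" if "good G a" "c = - a" for G a c
    using good_neg that by blast
  have gi: "good (int_game a) b" if "a = b" for a b using good_int that by simp
  have g1: "good (plus (int_game (n-1)) (neg (int_game m))) (k-1)"
    by (rule gp[OF good_int gn[OF good_int]]) (use assms in auto)
  have g2: "good (plus (int_game n) (neg (int_game (m-1)))) (k+1)"
    by (rule gp[OF good_int gn[OF good_int]]) (use assms in auto)
  have gz: "good zero_ul 0" unfolding zero_ul_def
    by (rule gp[OF good_int gn[OF good_int]]) auto
  have g3: "good (plus (int_game (k-1)) zero_ul) (k-1)"
    by (rule gp[OF good_int gz]) auto
  have g4: "good (plus (int_game k) (plus (int_game 0) (neg (int_game 1)))) (k-1)"
    by (rule gp[OF good_int gp[OF good_int gn[OF good_int]]]) auto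
  have g5: "good (plus (int_game k) (plus (int_game 1) (neg (int_game 0)))) (k+1)"
    by (rule gp[OF good_int gp[OF good_int gn[OF good_int]]]) auto
  have gkm: "good (int_game (k-1)) (k-1)" and gkp: "good (int_game (k+1)) (k+1)"
    by (rule good_int)+
  have oN: "LO (int_game n) = {|int_game (n - 1)|}" "RO (int_game n) = {||}"
    using int_pos_opts[of n] assms by auto
  have oM: "LO (int_game m) = {|int_game (m - 1)|}" "RO (int_game m) = {||}"
    using int_pos_opts[of m] assms by auto
  have oK: "LO (int_game k) = {|int_game (k - 1)|}" "RO (int_game k) = {||}"
    using int_pos_opts[of k] kp by auto
  have o1: "LO (int_game 1) = {|int_game 0|}" "RO (int_game 1) = {||}"
    using int_pos_opts[of 1] by auto
  have o0: "LO (int_game 0) = {||}" "RO (int_game 0) = {||}"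
    by (simp_all add: int_zero)
  have oZ: "LO zero_ul = {|plus (int_game 0) (neg (int_game 1))|}"
           "RO zero_ul = {|plus (int_game 1) (neg (int_game 0))|}"
    unfolding zero_ul_def by (simp_all add: LO_plus RO_plus LO_neg RO_neg o1 o0)
  have oG: "LO (plus (int_game n) (neg (int_game m))) = {|plus (int_game (n-1)) (neg (int_game m))|}"
          "RO (plus (int_game n) (neg (int_game m))) = {|plus (int_game n) (neg (int_game (m-1)))|}"
    by (simp_all add: LO_plus RO_plus LO_neg RO_neg oN oM)
  have oKK: "LO (plus (int_game k) zero_ul) = {|plus (int_game k) (plus (int_game 0) (neg (int_game 1))), plus (int_game (k-1)) zero_ul|}"
          "RO (plus (int_game k) zero_ul) = {|plus (int_game k) (plus (int_game 1) (neg (int_game 0)))|}"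
    by (simp_all add: LO_plus RO_plus oK oZ)
  have oH: "LO (Game {|int_game (k - 1)|} {|int_game (k + 1)|}) = {|int_game (k - 1)|}"
           "RO (Game {|int_game (k - 1)|} {|int_game (k + 1)|}) = {|int_game (k + 1)|}"
    by simp_all
  show ?thesis
    unfolding eq_dom_def oG oKK oH
    using rw0[OF g1 gkm] lw0[OF g1 gkm] rw0[OF g2 gkp] lw0[OF g2 gkp]
        rw0[OF gkm g3] lw0[OF gkm g3] rw0[OF gkm g4] lw0[OF gkm g4]
        rw0[OF gkp g5] lw0[OF gkp g5]
    by blast
qed

end
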